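(* Assume (A1)–(A3) and $m_1<0$. Then for every $k\in\mathbb N$, the random variable $\sup_{0\le s\le T_1(k)}|Y_1(s)|$ is $\mathbb P_{(k,0)}$-integrable, where $T_1(k)=\inf\{n>0: X_1(n)=k\}$.
   Context: Let $\mathbb N=\{0,1,2,\dots\}$ and fix an integer $k_0\ge1$. Let $\mu$, $\mu'_j$ ($0\le j<k_0$), $\mu''_i$ ($0\le i<k_0$), $\mu_{ij}$ ($0\le i,j<k_0$) be probability measures on $\mathbb Z^2$. The random walk $Z=(X(n),Y(n))$ on $\mathbb N^2$ has transition probabilities $p((i,j)\to(i',j'))$ equal to $\mu(i'-i,j'-j)$ if $i,j\ge k_0$; $\mu'_j(i'-i,j'-j)$ if $i\ge k_0$, $0\le j<k_0$; $\mu''_i(i'-i,j'-j)$ if $0\le i<k_0$, $j\ge k_0$; $\mu_{ij}(i'-i,j'-j)$ if $0\le i,j<k_0$. Assumptions: (A1) $\mu(a,b)=0$ if $a<-k_0$ or $b<-k_0$; $\mu'_j(a,b)=0$ if $a<-k_0$ or $b<-j$; $\mu''_i(a,b)=0$ if $b<-k_0$ or $a<-i$; $\mu_{ij}(a,b)=0$ if $a<-i$ or $b<-j$. (A2) There are $\delta,\gamma,C>0$ with $\sup_{(i,j)\in\mathbb N^2}\mathbb E_{(i,j)}[\exp(\delta(X(1)-i)+\gamma(Y(1)-j))]\le C$. (A3) $Z_0,Z_1,Z_2,Z$ are irreducible on their state spaces. $Z_0$: random walk on $\mathbb Z^2$ with increment law $\mu$; $m_1=\sum a\mu(a,b)$.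 $Z_1=(X_1,Y_1)$: Markov chain on $\mathbb N\times\mathbb Z$ with transitions $\mu(i'-i,j'-j)$ from $(i,j)$ if $i\ge k_0$ and $\mu''_i(i'-i,j'-j)$ if $0\le i<k_0$; $\mathbb P_{(k,0)}$ is its law from $(k,0)$. $Z_2$: Markov chain on $\mathbb Z\times\mathbb N$ with transitions $\mu$ if $j\ge k_0$ and $\mu'_j$ if $0\le j<k_0$. *)

theory Defs
  imports "HOL-Probability.Probability"
begin

definition natsq :: "(int \<times> int) set" where
  "natsq = {z. fst z \<ge> 0 \<and> snd z \<ge> 0}"

definition nat_int :: "(int \<times> int) set" where
  "nat_int = {z. fst z \<ge> 0}"

definition int_nat :: "(int \<times> int) set" where
  "int_nat = {z. snd z \<ge> 0}"

(* increment law of the walk Z on \<nat>\<^sup>2 at state (i,j) *)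
definition lawZ :: "nat \<Rightarrow> (int \<times> int) pmf \<Rightarrow> (nat \<Rightarrow> (int \<times> int) pmf) \<Rightarrow>
    (nat \<Rightarrow> (int \<times> int) pmf) \<Rightarrow> (nat \<Rightarrow> nat \<Rightarrow> (int \<times> int) pmf) \<Rightarrow> int \<times> int \<Rightarrow> (int \<times> int) pmf" where
  "lawZ k0 \<mu> \<mu>' \<mu>'' \<mu>2 z =
     (if fst z \<ge> int k0 \<and> snd z \<ge> int k0 then \<mu>
      else if fst z \<ge> int k0 then \<mu>' (nat (snd z))
      else if snd z \<ge> int k0 then \<mu>'' (nat (fst z))
      else \<mu>2 (nat (fst z)) (nat (snd z)))"

definition law1 :: "nat \<Rightarrow> (int \<times> int) pmf \<Rightarrow> (nat \<Rightarrow> (int \<times> int) pmf) \<Rightarrow> int \<times> int \<Rightarrow> (int \<times> int) pmf" where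
  "law1 k0 \<mu> \<mu>'' z = (if fst z \<ge> int k0 then \<mu> else \<mu>'' (nat (fst z)))"

definition law2 :: "nat \<Rightarrow> (int \<times> int) pmf \<Rightarrow> (nat \<Rightarrow> (int \<times> int) pmf) \<Rightarrow> int \<times> int \<Rightarrow> (int \<times> int) pmf" where
  "law2 k0 \<mu> \<mu>' z = (if snd z \<ge> int k0 then \<mu> else \<mu>' (nat (snd z)))"

definition trans_prob :: "(int \<times> int \<Rightarrow> (int \<times> int) pmf) \<Rightarrow> int \<times> int \<Rightarrow> int \<times> int \<Rightarrow> real" where
  "trans_prob L z z' = pmf (L z) (fst z' - fst z, snd z' - snd z)"

definition irreducible_on :: "'s set \<Rightarrow> ('s \<Rightarrow> 's \<Rightarrow> real) \<Rightarrow> bool" where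
  "irreducible_on S p \<longleftrightarrow>
     (\<forall>x\<in>S. \<forall>y\<in>S. (x, y) \<in> {(u, v). u \<in> S \<and> v \<in> S \<and> p u v > 0}\<^sup>*)"

definition markov_chain_from :: "'a measure \<Rightarrow> (nat \<Rightarrow> 'a \<Rightarrow> 's) \<Rightarrow> ('s \<Rightarrow> 's \<Rightarrow> real) \<Rightarrow> 's \<Rightarrow> bool" where
  "markov_chain_from M Z p z0 \<longleftrightarrow>
     prob_space M \<and>
     (\<forall>n. Z n \<in> measurable M (count_space UNIV)) \<and>
     measure M {\<omega>\<in>space M. Z 0 \<omega> = z0} = 1 \<and>
     (\<forall>n (zs :: nat \<Rightarrow> 's).
        measure M {\<omega>\<in>space M. \<forall>i\<le>Suc n. Z i \<omega> = zs i}
        = measure M {\<omega>\<in>space M. \<forall>i\<le>n. Z i \<omega> = zs i} * p (zs n) (zs (Suc n)))"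

end

theory Submission
  imports Defs
begin


lemma nn_integral_countable_rv:
  fixes V :: "'a \<Rightarrow> 'b::countable" and F :: "'b \<Rightarrow> ennreal"
  assumes V: "V \<in> measurable M (count_space UNIV)"
  shows "(\<integral>\<^sup>+\<omega>. F (V \<omega>) \<partial>M) = (\<integral>\<^sup>+v. F v * emeasure M {\<omega>\<in>space M. V \<omega> = v} \<partial>count_space UNIV)"
proof -
  have meas: "{\<omega>\<in>space M. V \<omega> = v} \<in> sets M" for v
    using V by measurable
  have "(\<integral>\<^sup>+\<omega>. F (V \<omega>) \<partial>M) = (\<integral>\<^sup>+\<omega>. (\<integral>\<^sup>+v. F v * indicator {\<omega>\<in>space M. V \<omega> = v} \<omega> \<partial>count_space UNIV) \<partial>M)"
  proof (rule nn_integral_cong)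
    fix \<omega> assume "\<omega> \<in> space M"
    then show "F (V \<omega>) = (\<integral>\<^sup>+v. F v * indicator {\<omega>\<in>space M. V \<omega> = v} \<omega> \<partial>count_space UNIV)"
      by (subst nn_integral_count_space'[of "{V \<omega>}"]) (auto split: split_indicator)
  qed
  also have "\<dots> = (\<integral>\<^sup>+v. (\<integral>\<^sup>+\<omega>. F v * indicator {\<omega>\<in>space M. V \<omega> = v} \<omega> \<partial>M) \<partial>count_space UNIV)"
    by (rule nn_integral_count_space_nn_integral) (use meas in auto)
  also have "\<dots> = (\<integral>\<^sup>+v. F v * emeasure M {\<omega>\<in>space M. V \<omega> = v} \<partial>count_space UNIV)"
    by (rule nn_integral_cong) (simp add: nn_integral_cmult_indicator meas)
  finally show ?thesis .
qed

context
  fixes M :: "'a measure" and Z :: "nat \<Rightarrow> 'a \<Rightarrow> int \<times> int" and p :: "int \<times> int \<Rightarrow> int \<times> int \<Rightarrow> real"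
    and z0 :: "int \<times> int"
  assumes chain: "markov_chain_from M Z p z0"
begin

definition hist :: "nat \<Rightarrow> 'a \<Rightarrow> (int \<times> int) list" where
  "hist n \<omega> = map (\<lambda>i. Z i \<omega>) [0..<Suc n]"

lemma ps: "prob_space M" using chain unfolding markov_chain_from_def by auto

lemma Z_meas[measurable]: "Z n \<in> measurable M (count_space UNIV)"
  using chain unfolding markov_chain_from_def by auto

lemma hist_Suc: "hist (Suc n) \<omega> = hist n \<omega> @ [Z (Suc n) \<omega>]"
  by (simp add: hist_def)

lemma hist_0: "hist 0 \<omega> = [Z 0 \<omega>]"
  by (simp add: hist_def)

lemma hist_nth: "i \<le> n \<Longrightarrow> hist n \<omega> ! i = Z i \<omega>"
  by (simp add: hist_def nth_append del: upt_Suc)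

lemma hist_length[simp]: "length (hist n \<omega>) = Suc n"
  by (simp add: hist_def)

lemma hist_last: "last (hist n \<omega>) = Z n \<omega>"
  by (simp add: hist_def)

lemma hist_meas[measurable]: "hist n \<in> measurable M (count_space UNIV)"
proof (induction n)
  case 0
  have "(\<lambda>\<omega>. [Z 0 \<omega>]) \<in> measurable M (count_space UNIV)"
    by (rule measurable_compose[OF Z_meas]) simp
  then show ?case by (simp add: hist_0 del: upt_Suc)
next
  case (Suc n)
  have "(\<lambda>\<omega>. (hist n \<omega>, Z (Suc n) \<omega>)) \<in> measurable M (count_space UNIV \<Otimes>\<^sub>M count_space UNIV)"
    using Suc by measurable
  then have "(\<lambda>\<omega>. (hist n \<omega>, Z (Suc n) \<omega>)) \<in> measurable M (count_space UNIV)"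
    by (simp add: pair_measure_countable)
  then have "(\<lambda>\<omega>. (\<lambda>(l, z). l @ [z]) (hist n \<omega>, Z (Suc n) \<omega>)) \<in> measurable M (count_space UNIV)"
    by (rule measurable_compose) simp
  then show ?case by (simp add: hist_Suc[abs_def] del: upt_Suc)
qed

lemma AE_start: "AE \<omega> in M. Z 0 \<omega> = z0"
proof -
  interpret prob_space M by (rule ps)
  have "measure M {\<omega>\<in>space M. Z 0 \<omega> = z0} = 1"
    using chain unfolding markov_chain_from_def by auto
  moreover have "{\<omega>\<in>space M. Z 0 \<omega> = z0} \<in> sets M" by measurable
  ultimately show ?thesis
    by (simp add: prob_space.AE_in_set_eq_1[OF ps] prob_eq_1)
qed

lemma hist_eq_iff: "length l = Suc n \<Longrightarrow> hist n \<omega> = l \<longleftrightarrow> (\<forall>i\<le>n. Z i \<omega> = l ! i)"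
  by (auto simp: list_eq_iff_nth_eq hist_nth less_Suc_eq_le)

lemma emeasure_step:
  assumes pnn: "\<And>z z'. p z z' \<ge> 0"
  shows "emeasure M {\<omega>\<in>space M. (hist n \<omega>, Z (Suc n) \<omega>) = (l, z')}
    = emeasure M {\<omega>\<in>space M. hist n \<omega> = l} * ennreal (p (last l) z')"
proof (cases "length l = Suc n")
  case False
  then have E1: "{\<omega>\<in>space M. hist n \<omega> = l} = {}" and E2: "{\<omega>\<in>space M. (hist n \<omega>, Z (Suc n) \<omega>) = (l, z')} = {}"
    by auto
  show ?thesis unfolding E1 E2 by simp
next
  case True
  interpret prob_space M by (rule ps)
  define zs where "zs = (\<lambda>i. (l @ [z']) ! i)"
  have zsn: "zs n = last l" using True by (simp add: zs_def nth_append) (metis diff_Suc_1 last_conv_nth list.size(3) nat.distinct(1))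
  have zsSn: "zs (Suc n) = z'" using True by (simp add: zs_def nth_append)
  have A: "{\<omega>\<in>space M. (hist n \<omega>, Z (Suc n) \<omega>) = (l, z')} = {\<omega>\<in>space M. \<forall>i\<le>Suc n. Z i \<omega> = zs i}"
    using True by (auto simp: hist_eq_iff zs_def nth_append le_Suc_eq)
  have B: "{\<omega>\<in>space M. hist n \<omega> = l} = {\<omega>\<in>space M. \<forall>i\<le>n. Z i \<omega> = zs i}"
    using True by (auto simp: hist_eq_iff zs_def nth_append)
  have C: "measure M {\<omega>\<in>space M. \<forall>i\<le>Suc n. Z i \<omega> = zs i}
        = measure M {\<omega>\<in>space M. \<forall>i\<le>n. Z i \<omega> = zs i} * p (zs n) (zs (Suc n))"
    using chain unfolding markov_chain_from_def by blast
  have "emeasure M {\<omega>\<in>space M. (hist n \<omega>, Z (Suc n) \<omega>) = (l, z')}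
     = ennreal (measure M {\<omega>\<in>space M. \<forall>i\<le>n. Z i \<omega> = zs i} * p (zs n) (zs (Suc n)))"
    by (simp only: A emeasure_eq_measure C)
  also have "\<dots> = emeasure M {\<omega>\<in>space M. hist n \<omega> = l} * ennreal (p (last l) z')"
    by (simp only: B emeasure_eq_measure zsn zsSn) (simp add: ennreal_mult pnn)
  finally show ?thesis .
qed

lemma markov_step:
  fixes F :: "(int \<times> int) list \<Rightarrow> ennreal" and g :: "int \<times> int \<Rightarrow> int \<times> int \<Rightarrow> ennreal"
  assumes pnn: "\<And>z z'. p z z' \<ge> 0"
  shows "(\<integral>\<^sup>+\<omega>. F (hist n \<omega>) * g (Z n \<omega>) (Z (Suc n) \<omega>) \<partial>M)
       = (\<integral>\<^sup>+\<omega>. F (hist n \<omega>) * (\<integral>\<^sup>+z'. ennreal (p (Z n \<omega>) z') * g (Z n \<omega>) z' \<partial>count_space UNIV) \<partial>M)"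
proof -
  define V where "V = (\<lambda>\<omega>. (hist n \<omega>, Z (Suc n) \<omega>))"
  have Vm: "V \<in> measurable M (count_space UNIV)"
  proof -
    have "V \<in> measurable M (count_space UNIV \<Otimes>\<^sub>M count_space UNIV)"
      unfolding V_def by measurable
    then show ?thesis by (simp add: pair_measure_countable)
  qed
  define G where "G = (\<lambda>(l, z'). F l * g (last l) z')"
  interpret cs: sigma_finite_measure "count_space (UNIV :: (int \<times> int) set)"
    by (rule sigma_finite_measure_count_space)
  have "(\<integral>\<^sup>+\<omega>. F (hist n \<omega>) * g (Z n \<omega>) (Z (Suc n) \<omega>) \<partial>M) = (\<integral>\<^sup>+\<omega>. G (V \<omega>) \<partial>M)"
    by (simp add: G_def V_def hist_last)
  also have "\<dots> = (\<integral>\<^sup>+v. G v * emeasure M {\<omega>\<in>space M. V \<omega> = v} \<partial>count_space UNIV)"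
    by (rule nn_integral_countable_rv[OF Vm])
  also have "\<dots> = (\<integral>\<^sup>+v. G v * emeasure M {\<omega>\<in>space M. V \<omega> = v} \<partial>(count_space UNIV \<Otimes>\<^sub>M count_space UNIV))"
    by (rule nn_integral_count_space_prod_eq[symmetric])
  also have "\<dots> = (\<integral>\<^sup>+l. \<integral>\<^sup>+z'. G (l, z') * emeasure M {\<omega>\<in>space M. V \<omega> = (l, z')} \<partial>count_space UNIV \<partial>count_space UNIV)"
    by (rule cs.nn_integral_fst[symmetric]) (simp add: pair_measure_countable)
  also have "\<dots> = (\<integral>\<^sup>+l. (F l * emeasure M {\<omega>\<in>space M. hist n \<omega> = l}) * (\<integral>\<^sup>+z'. ennreal (p (last l) z') * g (last l) z' \<partial>count_space UNIV) \<partial>count_space UNIV)"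
    apply (rule nn_integral_cong)
    apply (subst nn_integral_cmult[symmetric])
     apply simp
    apply (rule nn_integral_cong)
    apply (simp only: V_def emeasure_step[OF pnn])
    apply (simp add: G_def mult_ac)
    done
  also have "\<dots> = (\<integral>\<^sup>+l. (F l * (\<integral>\<^sup>+z'. ennreal (p (last l) z') * g (last l) z' \<partial>count_space UNIV)) * emeasure M {\<omega>\<in>space M. hist n \<omega> = l} \<partial>count_space UNIV)"
    by (simp add: mult_ac)
  also have "\<dots> = (\<integral>\<^sup>+\<omega>. F (hist n \<omega>) * (\<integral>\<^sup>+z'. ennreal (p (last (hist n \<omega>)) z') * g (last (hist n \<omega>)) z' \<partial>count_space UNIV) \<partial>M)"
    by (rule nn_integral_countable_rv[symmetric]) measurable
  finally show ?thesis by (simp add: hist_last)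
qed

end



lemma pmf_int_lt1:
  fixes P :: "'b pmf" and h :: "'b \<Rightarrow> ennreal"
  assumes h1: "\<And>d. h d \<le> 1" and hpt: "h pt < 1" and q: "pmf P pt > 0"
  shows "(\<integral>\<^sup>+d. h d \<partial>measure_pmf P) < 1"
proof -
  obtain t where t: "h pt = ennreal t" "0 \<le> t" "t < 1"
  proof (cases "h pt")
    case (real r)
    then show ?thesis using hpt that by (simp add: ennreal_less_one_iff)
  next
    case top
    then show ?thesis using hpt by simp
  qed
  define q where "q = pmf P pt"
  have q0: "0 < q" "q \<le> 1" using q by (auto simp: q_def pmf_le_1)
  have "(\<integral>\<^sup>+d. h d \<partial>measure_pmf P) \<le> (\<integral>\<^sup>+d. indicator (UNIV - {pt}) d + ennreal t * indicator {pt} d \<partial>measure_pmf P)"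
  proof (rule nn_integral_mono)
    fix d show "h d \<le> indicator (UNIV - {pt}) d + ennreal t * indicator {pt} d"
      using h1[of d] t by (cases "d = pt") auto
  qed
  also have "\<dots> = emeasure (measure_pmf P) (UNIV - {pt}) + ennreal t * emeasure (measure_pmf P) {pt}"
    by (subst nn_integral_add) (simp_all add: nn_integral_cmult)
  also have "emeasure (measure_pmf P) (UNIV - {pt}) = ennreal (1 - q)"
    using measure_pmf.prob_compl[of "{pt}" P]
    by (simp add: measure_pmf.emeasure_eq_measure measure_pmf_single q_def)
  also have "emeasure (measure_pmf P) {pt} = ennreal q"
    by (simp add: measure_pmf.emeasure_eq_measure measure_pmf_single q_def)
  also have "ennreal (1 - q) + ennreal t * ennreal q = ennreal (1 - q + t * q)"
    using q0 t by (subst ennreal_plus) (simp_all add: ennreal_mult[symmetric])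
  also have "1 - q + t * q < 1"
    using q0 t by (simp add: mult_less_cancel_right1)
  then have "ennreal (1 - q + t * q) < 1"
    by (simp add: ennreal_less_one_iff)
  finally show ?thesis .
qed
context
  fixes k0 :: nat and \<mu> :: "(int \<times> int) pmf" and \<mu>'' :: "nat \<Rightarrow> (int \<times> int) pmf"
    and \<delta> \<gamma> C :: real and k :: nat
  assumes k0: "k0 \<ge> 1"
    and A1_mu: "\<And>a b. a < - int k0 \<or> b < - int k0 \<Longrightarrow> pmf \<mu> (a, b) = 0"
    and A1_mu'': "\<And>i a b. i < k0 \<Longrightarrow> b < - int k0 \<or> a < - int i \<Longrightarrow> pmf (\<mu>'' i) (a, b) = 0"
    and pos: "\<delta> > 0" "\<gamma> > 0" "C > 0"
begin

definition Lx :: "int \<Rightarrow> (int \<times> int) pmf" where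
  "Lx x = (if int k0 \<le> x then \<mu> else \<mu>'' (nat x))"

definition R :: "(int \<Rightarrow> ennreal) \<Rightarrow> int \<Rightarrow> ennreal" where
  "R f x = (\<integral>\<^sup>+d. (if x + fst d = int k then 0 else f (x + fst d)) \<partial>measure_pmf (Lx x))"

lemma supp:
  assumes "d \<in> set_pmf (Lx x)"
  shows "fst d \<ge> - int k0" "snd d \<ge> - int k0" "0 \<le> x \<Longrightarrow> 0 \<le> x + fst d"
proof -
  obtain a b where d: "d = (a, b)" by force
  have "pmf (Lx x) (a, b) \<noteq> 0" using assms d by (simp add: set_pmf_iff)
  then have *: "a \<ge> - int k0 \<and> b \<ge> - int k0 \<and> (0 \<le> x \<longrightarrow> 0 \<le> x + a)"
  proof (cases "int k0 \<le> x")
    case True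
    then have "\<not> (a < - int k0 \<or> b < - int k0)" using \<open>pmf (Lx x) (a, b) \<noteq> 0\<close> A1_mu[of a b] by (auto simp: Lx_def)
    then show ?thesis using True by auto
  next
    case False
    then have "nat x < k0" using k0 by linarith
    then have "\<not> (b < - int k0 \<or> a < - int (nat x))" using \<open>pmf (Lx x) (a, b) \<noteq> 0\<close> A1_mu''[where i="nat x" and a=a and b=b] False by (auto simp: Lx_def)
    then show ?thesis using False \<open>nat x < k0\<close> by (auto split: if_splits)
  qed
  show "fst d \<ge> - int k0" "snd d \<ge> - int k0" "0 \<le> x \<Longrightarrow> 0 \<le> x + fst d" using * d by auto
qed

lemma R_mono: "(\<And>y. f y \<le> g y) \<Longrightarrow> R f x \<le> R g x"
  unfolding R_def by (rule nn_integral_mono) auto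

lemma R_mono_supp: "0 \<le> x \<Longrightarrow> (\<And>y. 0 \<le> y \<Longrightarrow> f y \<le> g y) \<Longrightarrow> R f x \<le> R g x"
  unfolding R_def by (rule nn_integral_mono_AE) (auto simp: AE_measure_pmf_iff dest: supp(3))

lemma R_add: "R (\<lambda>y. f y + g y) x = R f x + R g x"
  unfolding R_def by (subst nn_integral_add[symmetric]) (auto intro!: nn_integral_cong)

lemma R_cmult: "R (\<lambda>y. c * f y) x = c * R f x"
  unfolding R_def by (subst nn_integral_cmult[symmetric]) (auto intro!: nn_integral_cong)

lemma R_sum: "R (\<lambda>y. \<Sum>j\<in>J. f j y) x = (\<Sum>j\<in>J. R (f j) x)"
  unfolding R_def by (subst nn_integral_sum[symmetric]) (auto intro!: nn_integral_cong)

lemma R_le1: "(\<And>y. f y \<le> 1) \<Longrightarrow> R f x \<le> 1"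
proof -
  assume f: "\<And>y. f y \<le> 1"
  have "R f x \<le> (\<integral>\<^sup>+d. 1 \<partial>measure_pmf (Lx x))"
    unfolding R_def by (rule nn_integral_mono) (auto simp: f)
  then show ?thesis by simp
qed

lemma Rpow_le1: "(R ^^ n) (\<lambda>_. 1) x \<le> 1"
  by (induction n arbitrary: x) (auto intro: R_le1)

lemma Rpow_mono: "(\<And>y. f y \<le> g y) \<Longrightarrow> (R ^^ n) f x \<le> (R ^^ n) g x"
  by (induction n arbitrary: x) (auto intro: R_mono)

lemma Rpow_decr: "m \<le> n \<Longrightarrow> (R ^^ n) (\<lambda>_. 1) x \<le> (R ^^ m) (\<lambda>_. 1) x"
proof -
  assume "m \<le> n"
  then obtain d where n: "n = m + d" by (metis le_add_diff_inverse)
  have "(R ^^ n) (\<lambda>_. 1) x = (R ^^ m) ((R ^^ d) (\<lambda>_. 1)) x"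
    by (simp add: n funpow_add)
  also have "\<dots> \<le> (R ^^ m) (\<lambda>_. 1) x"
    by (rule Rpow_mono) (rule Rpow_le1)
  finally show ?thesis .
qed

definition rX :: "(int \<times> int) set" where
  "rX = {(x, y). 0 \<le> x \<and> (\<exists>b. pmf (Lx x) (y - x, b) > 0)}"

lemma reach_step:
  assumes "pmf (Lx x) (y - x, b) > 0" "y = int k \<or> g y < 1" "\<And>y. g y \<le> 1"
  shows "R g x < 1"
  unfolding R_def
proof (rule pmf_int_lt1[where pt = "(y - x, b)"])
  show "(if x + fst (y - x, b) = int k then 0 else g (x + fst (y - x, b))) < 1"
    using assms(2) by auto
qed (use assms in \<open>auto simp: R_def\<close>)

lemma reach:
  assumes "(x, int k) \<in> rX\<^sup>+"
  shows "\<exists>m. (R ^^ m) (\<lambda>_. 1) x < 1"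
  using assms
proof (induction rule: converse_trancl_induct)
  case (base x)
  then obtain b where "pmf (Lx x) (int k - x, b) > 0" by (auto simp: rX_def)
  then have "R (\<lambda>_. 1) x < 1" by (rule reach_step) auto
  then have "(R ^^ 1) (\<lambda>_. 1) x < 1" by simp
  then show ?case by blast
next
  case (step x y)
  then obtain b where b: "pmf (Lx x) (y - x, b) > 0" by (auto simp: rX_def)
  from step obtain m where m: "(R ^^ m) (\<lambda>_. 1) y < 1" by auto
  show ?case
  proof (cases "y = int k")
    case True
    then have "R (\<lambda>_. 1) x < 1" using b by (intro reach_step) auto
    then have "(R ^^ 1) (\<lambda>_. 1) x < 1" by simp
    then show ?thesis by blast
  next
    case False
    have "R ((R ^^ m) (\<lambda>_. 1)) x < 1"
      by (rule reach_step[OF b]) (use m Rpow_le1 in auto)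
    then show ?thesis by (metis comp_apply funpow.simps(2))
  qed
qed


lemma t_le_exp: "(c::real) > 0 \<Longrightarrow> (t::real) \<le> exp (c * t) / c"
proof -
  assume c: "c > 0"
  have "1 + c * t \<le> exp (c * t)" by (rule exp_ge_add_one_self)
  then have "c * t \<le> exp (c * t)" by linarith
  then show ?thesis using c by (simp add: field_simps)
qed

lemma snd_bound:
  assumes "d \<in> set_pmf (Lx x)"
  shows "real_of_int \<bar>snd d\<bar> \<le> real k0 + exp (\<delta> * real k0) / \<gamma> * exp (\<delta> * real_of_int (fst d) + \<gamma> * real_of_int (snd d))"
proof -
  define a where "a = real_of_int (fst d)"
  define b where "b = real_of_int (snd d)"
  have a: "a \<ge> - real k0" and b: "b \<ge> - real k0" using supp[OF assms] by (auto simp: a_def b_def)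
  have E0: "0 \<le> exp (\<delta> * real k0) / \<gamma> * exp (\<delta> * a + \<gamma> * b)" using pos by simp
  show ?thesis
  proof (cases "b < 0")
    case True
    then have "\<bar>b\<bar> \<le> real k0" using b by linarith
    then show ?thesis using E0 by (simp add: a_def[symmetric] b_def[symmetric])
  next
    case False
    have "b \<le> exp (\<gamma> * b) / \<gamma>" using pos by (intro t_le_exp) auto
    also have "exp (\<gamma> * b) = exp (\<delta> * a + \<gamma> * b) * exp (- \<delta> * a)"
      by (simp add: exp_add[symmetric])
    also have "\<dots> \<le> exp (\<delta> * a + \<gamma> * b) * exp (\<delta> * real k0)"
    proof -
      have "-(\<delta> * a) \<le> \<delta> * real k0" using mult_left_mono[of "-a" "real k0" \<delta>] a pos by simp
      then show ?thesis by (intro mult_left_mono) auto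
    qed
    finally have "b \<le> exp (\<delta> * real k0) / \<gamma> * exp (\<delta> * a + \<gamma> * b)"
      using pos by (simp add: field_simps)
    then show ?thesis using False by (simp add: a_def[symmetric] b_def[symmetric])
  qed
qed

lemma fst_bound:
  assumes "d \<in> set_pmf (Lx x)"
  shows "real_of_int (fst d) \<le> exp (\<gamma> * real k0) / \<delta> * exp (\<delta> * real_of_int (fst d) + \<gamma> * real_of_int (snd d))"
proof -
  define a where "a = real_of_int (fst d)"
  define b where "b = real_of_int (snd d)"
  have b: "b \<ge> - real k0" using supp[OF assms] by (auto simp: b_def)
  have "a \<le> exp (\<delta> * a) / \<delta>" using pos by (intro t_le_exp) auto
  also have "exp (\<delta> * a) = exp (\<delta> * a + \<gamma> * b) * exp (- \<gamma> * b)"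
    by (simp add: exp_add[symmetric])
  also have "\<dots> \<le> exp (\<delta> * a + \<gamma> * b) * exp (\<gamma> * real k0)"
  proof -
    have "-(\<gamma> * b) \<le> \<gamma> * real k0" using mult_left_mono[of "-b" "real k0" \<gamma>] b pos by simp
    then show ?thesis by (intro mult_left_mono) auto
  qed
  finally have "a \<le> exp (\<gamma> * real k0) / \<delta> * exp (\<delta> * a + \<gamma> * b)"
    using pos by (simp add: field_simps)
  then show ?thesis by (simp add: a_def[symmetric] b_def[symmetric])
qed

context
  assumes expb: "\<And>x. (\<integral>\<^sup>+ d. ennreal (exp (\<delta> * real_of_int (fst d) + \<gamma> * real_of_int (snd d))) \<partial>measure_pmf (Lx x)) \<le> ennreal C"
    and m1: "measure_pmf.expectation \<mu> (\<lambda>d. real_of_int (fst d)) < 0"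
    and reachA: "\<And>x. 0 \<le> x \<Longrightarrow> (x, int k) \<in> rX\<^sup>+"
begin

definition cY :: real where "cY = real k0 + exp (\<delta> * real k0) / \<gamma> * C"

lemma cY_bound: "(\<integral>\<^sup>+d. ennreal (real_of_int \<bar>snd d\<bar>) \<partial>measure_pmf (Lx x)) \<le> ennreal cY"
proof -
  have "(\<integral>\<^sup>+d. ennreal (real_of_int \<bar>snd d\<bar>) \<partial>measure_pmf (Lx x))
     \<le> (\<integral>\<^sup>+d. ennreal (real k0) + ennreal (exp (\<delta> * real k0) / \<gamma>) * ennreal (exp (\<delta> * real_of_int (fst d) + \<gamma> * real_of_int (snd d))) \<partial>measure_pmf (Lx x))"
  proof (rule nn_integral_mono_AE, unfold AE_measure_pmf_iff, intro ballI)
    fix d assume "d \<in> set_pmf (Lx x)"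
    from snd_bound[OF this] pos show "ennreal (real_of_int \<bar>snd d\<bar>) \<le> ennreal (real k0) + ennreal (exp (\<delta> * real k0) / \<gamma>) * ennreal (exp (\<delta> * real_of_int (fst d) + \<gamma> * real_of_int (snd d)))"
      by (simp add: ennreal_mult[symmetric] ennreal_plus[symmetric] del: ennreal_plus)
  qed
  also have "\<dots> = ennreal (real k0) + ennreal (exp (\<delta> * real k0) / \<gamma>) * (\<integral>\<^sup>+ d. ennreal (exp (\<delta> * real_of_int (fst d) + \<gamma> * real_of_int (snd d))) \<partial>measure_pmf (Lx x))"
    by (subst nn_integral_add) (simp_all add: nn_integral_cmult)
  also have "\<dots> \<le> ennreal (real k0) + ennreal (exp (\<delta> * real k0) / \<gamma>) * ennreal C"
    by (intro add_left_mono mult_left_mono expb) auto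
  also have "\<dots> = ennreal cY"
    using pos by (simp add: cY_def ennreal_mult[symmetric] ennreal_plus[symmetric] del: ennreal_plus)
  finally show ?thesis .
qed

definition \<alpha> :: real where "\<alpha> = - 1 / measure_pmf.expectation \<mu> (\<lambda>d. real_of_int (fst d))"

definition V :: "int \<Rightarrow> ennreal" where "V x = ennreal (\<alpha> * real_of_int x)"

definition BV :: real where "BV = \<alpha> * (real k0 + exp (\<gamma> * real k0) / \<delta> * C)"

lemma alpha_pos: "\<alpha> > 0" using m1 by (simp add: \<alpha>_def)

lemma BV_nonneg: "BV \<ge> 0" using alpha_pos pos by (simp add: BV_def)

lemma RV_low:
  assumes "0 \<le> x" "x < int k0"
  shows "R V x \<le> ennreal BV"
proof -
  have "R V x \<le> (\<integral>\<^sup>+d. ennreal (\<alpha> * real k0) + ennreal (\<alpha> * (exp (\<gamma> * real k0) / \<delta>)) * ennreal (exp (\<delta> * real_of_int (fst d) + \<gamma> * real_of_int (snd d))) \<partial>measure_pmf (Lx x))"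
    unfolding R_def
  proof (rule nn_integral_mono_AE, unfold AE_measure_pmf_iff, intro ballI)
    fix d assume d: "d \<in> set_pmf (Lx x)"
    define E where "E = exp (\<delta> * real_of_int (fst d) + \<gamma> * real_of_int (snd d))"
    define c where "c = exp (\<gamma> * real k0) / \<delta>"
    have "real_of_int (x + fst d) \<le> real k0 + c * E"
      using fst_bound[OF d] assms unfolding E_def c_def by simp
    then have "\<alpha> * real_of_int (x + fst d) \<le> \<alpha> * (real k0 + c * E)"
      using alpha_pos by (intro mult_left_mono) auto
    then have "\<alpha> * real_of_int (x + fst d) \<le> \<alpha> * real k0 + \<alpha> * (exp (\<gamma> * real k0) / \<delta>) * exp (\<delta> * real_of_int (fst d) + \<gamma> * real_of_int (snd d))"
      unfolding E_def c_def by (simp add: distrib_left mult.assoc)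
    then have "V (x + fst d) \<le> ennreal (\<alpha> * real k0) + ennreal (\<alpha> * (exp (\<gamma> * real k0) / \<delta>)) * ennreal (exp (\<delta> * real_of_int (fst d) + \<gamma> * real_of_int (snd d)))"
      using alpha_pos pos unfolding V_def
      by (simp add: ennreal_mult[symmetric] ennreal_plus[symmetric] ennreal_leI del: ennreal_plus)
    then show "(if x + fst d = int k then 0 else V (x + fst d)) \<le> ennreal (\<alpha> * real k0) + ennreal (\<alpha> * (exp (\<gamma> * real k0) / \<delta>)) * ennreal (exp (\<delta> * real_of_int (fst d) + \<gamma> * real_of_int (snd d)))"
      by auto
  qed
  also have "\<dots> = ennreal (\<alpha> * real k0) + ennreal (\<alpha> * (exp (\<gamma> * real k0) / \<delta>)) * (\<integral>\<^sup>+ d. ennreal (exp (\<delta> * real_of_int (fst d) + \<gamma> * real_of_int (snd d))) \<partial>measure_pmf (Lx x))"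
    by (subst nn_integral_add) (simp_all add: nn_integral_cmult)
  also have "\<dots> \<le> ennreal (\<alpha> * real k0) + ennreal (\<alpha> * (exp (\<gamma> * real k0) / \<delta>)) * ennreal C"
    by (intro add_left_mono mult_left_mono expb) auto
  also have "\<dots> = ennreal BV"
    using pos alpha_pos by (simp add: BV_def ennreal_mult[symmetric] ennreal_plus[symmetric] algebra_simps del: ennreal_plus)
  finally show ?thesis .
qed

lemma RV_high:
  assumes "int k0 \<le> x"
  shows "1 + R V x \<le> V x"
proof -
  let ?m = "measure_pmf.expectation \<mu> (\<lambda>d. real_of_int (fst d))"
  have int: "integrable (measure_pmf \<mu>) (\<lambda>d. real_of_int (fst d))"
    using m1 not_integrable_integral_eq by fastforce
  have L: "Lx x = \<mu>" using assms by (simp add: Lx_def)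
  have nn: "AE d in measure_pmf \<mu>. 0 \<le> \<alpha> * real_of_int (x + fst d)"
    unfolding AE_measure_pmf_iff
  proof
    fix d assume "d \<in> set_pmf \<mu>"
    then have "0 \<le> x + fst d" using supp(3)[of d x] assms L k0 by auto
    then show "0 \<le> \<alpha> * real_of_int (x + fst d)" using alpha_pos by simp
  qed
  have int2: "integrable (measure_pmf \<mu>) (\<lambda>d. \<alpha> * real_of_int (x + fst d))"
    using int by simp
  have I: "(\<integral>d. \<alpha> * real_of_int (x + fst d) \<partial>measure_pmf \<mu>) = \<alpha> * real_of_int x - 1"
  proof -
    have "(\<integral>d. \<alpha> * real_of_int (x + fst d) \<partial>measure_pmf \<mu>) = \<alpha> * (\<integral>d. real_of_int x + real_of_int (fst d) \<partial>measure_pmf \<mu>)"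
      by simp
    also have "(\<integral>d. real_of_int x + real_of_int (fst d) \<partial>measure_pmf \<mu>) = real_of_int x + ?m"
      using int by (subst Bochner_Integration.integral_add) (auto simp: measure_pmf.prob_space)
    finally show ?thesis using m1 by (simp add: \<alpha>_def field_simps)
  qed
  have Inn: "0 \<le> \<alpha> * real_of_int x - 1"
    using integral_nonneg_AE[OF nn] I by simp
  have "R V x \<le> (\<integral>\<^sup>+d. ennreal (\<alpha> * real_of_int (x + fst d)) \<partial>measure_pmf \<mu>)"
    unfolding R_def L V_def by (rule nn_integral_mono) auto
  also have "\<dots> = ennreal (\<alpha> * real_of_int x - 1)"
    using nn_integral_eq_integral[OF int2 nn] I by simp
  finally have "1 + R V x \<le> 1 + ennreal (\<alpha> * real_of_int x - 1)" by (rule add_left_mono)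
  also have "\<dots> = V x"
  proof -
    have "ennreal 1 + ennreal (\<alpha> * real_of_int x - 1) = ennreal (1 + (\<alpha> * real_of_int x - 1))"
      using Inn by (rule ennreal_plus[symmetric, rotated]) simp
    then show ?thesis by (simp add: V_def)
  qed
  finally show ?thesis .
qed


lemma exists_N: "\<exists>N. \<forall>x\<in>{0..<int k0}. (R ^^ N) (\<lambda>_. 1) x < 1"
proof -
  have "\<forall>x\<in>{0..<int k0}. \<exists>m. (R ^^ m) (\<lambda>_. 1) x < 1"
    using reach reachA by auto
  then obtain f where f: "\<And>x. x \<in> {0..<int k0} \<Longrightarrow> (R ^^ f x) (\<lambda>_. 1) x < 1"
    by metis
  define N where "N = Max (f ` {0..<int k0})"
  have "\<forall>x\<in>{0..<int k0}. (R ^^ N) (\<lambda>_. 1) x < 1"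
  proof
    fix x assume x: "x \<in> {0..<int k0}"
    have "f x \<le> N" unfolding N_def using x by (intro Max_ge) auto
    then have "(R ^^ N) (\<lambda>_. 1) x \<le> (R ^^ f x) (\<lambda>_. 1) x" by (rule Rpow_decr)
    also have "\<dots> < 1" using f[OF x] .
    finally show "(R ^^ N) (\<lambda>_. 1) x < 1" .
  qed
  then show ?thesis ..
qed

definition NN :: nat where "NN = (SOME N. \<forall>x\<in>{0..<int k0}. (R ^^ N) (\<lambda>_. 1) x < 1)"

lemma NN: "x \<in> {0..<int k0} \<Longrightarrow> (R ^^ NN) (\<lambda>_. 1) x < 1"
  using someI_ex[OF exists_N] unfolding NN_def by blast

definition ee :: ennreal where "ee = Max ((\<lambda>x. (R ^^ NN) (\<lambda>_. 1) x) ` {0..<int k0})"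

lemma ee_lt1: "ee < 1"
proof -
  have "{0..<int k0} \<noteq> {}" using k0 by auto
  then show ?thesis unfolding ee_def using NN by (subst Max_less_iff) auto
qed

lemma ee_ge: "x \<in> {0..<int k0} \<Longrightarrow> (R ^^ NN) (\<lambda>_. 1) x \<le> ee"
  unfolding ee_def by (intro Max_ge) auto

definition er :: real where "er = enn2real ee"

lemma er: "ee = ennreal er" "0 \<le> er" "er < 1"
proof -
  have "ee \<noteq> top" using ee_lt1 by auto
  then show "ee = ennreal er" unfolding er_def by (simp add: ennreal_enn2real_if)
  show "0 \<le> er" by (simp add: er_def)
  show "er < 1" using ee_lt1 \<open>ee = ennreal er\<close> by (simp add: ennreal_less_one_iff)
qed

definition phi :: "int \<Rightarrow> ennreal" where "phi x = (\<Sum>j<NN. (R ^^ j) (\<lambda>_. 1) x)"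

lemma phi_id: "1 + R phi x = phi x + (R ^^ NN) (\<lambda>_. 1) x"
proof -
  have "R phi x = (\<Sum>j<NN. R ((R ^^ j) (\<lambda>_. 1)) x)"
    unfolding phi_def by (rule R_sum)
  also have "\<dots> = (\<Sum>j<NN. (R ^^ Suc j) (\<lambda>_. 1) x)" by simp
  finally have "1 + R phi x = (R ^^ 0) (\<lambda>_. 1) x + (\<Sum>j<NN. (R ^^ Suc j) (\<lambda>_. 1) x)" by simp
  also have "\<dots> = (\<Sum>j<Suc NN. (R ^^ j) (\<lambda>_. 1) x)"
    by (rule sum.lessThan_Suc_shift[symmetric])
  also have "\<dots> = phi x + (R ^^ NN) (\<lambda>_. 1) x"
    by (simp add: phi_def)
  finally show ?thesis .
qed

lemma phi_le: "phi x \<le> of_nat NN"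
proof -
  have "phi x \<le> (\<Sum>j<NN. 1)" unfolding phi_def by (intro sum_mono Rpow_le1)
  then show ?thesis by simp
qed

lemma phi_fin: "phi x \<noteq> top"
  using phi_le[of x] by (metis ennreal_of_nat_neq_top neq_top_trans)

lemma Rphi_le: "R phi x \<le> phi x"
proof -
  have "R phi x + 1 \<le> phi x + 1"
    using phi_id[of x] Rpow_le1[of NN x] by (metis add.commute add_left_mono)
  then have "1 + R phi x \<le> 1 + phi x" by (simp add: add.commute)
  then show ?thesis by (simp add: ennreal_add_left_cancel_le)
qed

definition Mc :: real where "Mc = (BV + 1) / (1 - er)"

lemma Mc_pos: "Mc > 0" using BV_nonneg er unfolding Mc_def by (intro divide_pos_pos) auto

definition W :: "int \<Rightarrow> ennreal" where "W x = V x + ennreal Mc * phi x"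

lemma W_fin: "W x < top"
  using phi_fin[of x] by (simp add: W_def V_def ennreal_mult_less_top less_top)

lemma W_drift:
  assumes "0 \<le> x"
  shows "1 + R W x \<le> W x"
proof -
  have RW: "R W x = R V x + ennreal Mc * R phi x"
    unfolding W_def by (simp add: R_add R_cmult)
  show ?thesis
  proof (cases "int k0 \<le> x")
    case True
    have "1 + R W x = (1 + R V x) + ennreal Mc * R phi x" by (simp add: RW add.assoc)
    also have "\<dots> \<le> V x + ennreal Mc * phi x"
      by (intro add_mono RV_high[OF True] mult_left_mono Rphi_le) auto
    finally show ?thesis by (simp add: W_def)
  next
    case False
    then have xin: "x \<in> {0..<int k0}" using assms by auto
    have rv: "R V x \<le> ennreal BV" using RV_low assms False by simp
    obtain rvr where rvr: "R V x = ennreal rvr" "0 \<le> rvr"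
      using rv by (cases "R V x") (auto simp: top_unique)
    obtain fr where fr: "phi x = ennreal fr" "0 \<le> fr"
      using phi_fin[of x] by (cases "phi x") auto
    obtain rp where rp: "R phi x = ennreal rp" "0 \<le> rp"
      using Rphi_le[of x] phi_fin[of x] by (cases "R phi x") (auto simp: top_unique)
    obtain sr where sr: "(R ^^ NN) (\<lambda>_. 1) x = ennreal sr" "0 \<le> sr"
      using Rpow_le1[of NN x] by (cases "(R ^^ NN) (\<lambda>_. 1) x") (auto simp: top_unique)
    have "ennreal (1 + rp) = ennreal (fr + sr)"
      using phi_id[of x] rp fr sr by (metis ennreal_1 ennreal_plus zero_le_one)
    then have id: "1 + rp = fr + sr" using rp fr sr by (subst (asm) ennreal_inj) auto
    have srle: "sr \<le> er" using ee_ge[OF xin] sr er by simp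
    have rvle: "rvr \<le> BV" using rv rvr BV_nonneg by (simp add: ennreal_le_iff)
    have "Mc * (1 - er) = BV + 1" using er by (simp add: Mc_def)
    then have A: "Mc - Mc * er = BV + 1" by (metis mult.right_neutral right_diff_distrib)
    have B: "Mc * sr \<le> Mc * er" using Mc_pos srle by (simp add: mult_left_mono)
    have C: "Mc * fr = Mc + Mc * rp - Mc * sr"
    proof -
      have "fr = 1 + rp - sr" using id by linarith
      then have "Mc * fr = Mc * (1 + rp - sr)" by simp
      then show ?thesis by (simp add: right_diff_distrib distrib_left)
    qed
    from A B C have key: "1 + rvr + Mc * rp \<le> Mc * fr"
      using rvle by linarith
    have "R W x = ennreal (rvr + Mc * rp)"
      using RW rvr rp Mc_pos
      by (simp add: ennreal_plus[symmetric] ennreal_mult[symmetric] del: ennreal_plus)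
    then have "1 + R W x = ennreal (1 + (rvr + Mc * rp))"
      using rvr rp Mc_pos by (metis ennreal_1 ennreal_plus zero_le_one add_nonneg_nonneg mult_nonneg_nonneg less_imp_le)
    also have "1 + (rvr + Mc * rp) = 1 + rvr + Mc * rp" by simp
    also have "\<dots> \<le> ennreal (Mc * fr)" using key by (rule ennreal_leI)
    also have "\<dots> \<le> W x" using fr Mc_pos by (simp add: W_def ennreal_mult)
    finally show ?thesis .
  qed
qed

lemma green_le_W:
  "0 \<le> x \<Longrightarrow> (\<Sum>j<n. (R ^^ j) (\<lambda>_. 1) x) \<le> W x"
proof (induction n arbitrary: x)
  case 0
  then show ?case by simp
next
  case (Suc n)
  have "(\<Sum>j<Suc n. (R ^^ j) (\<lambda>_. 1) x) = 1 + (\<Sum>j<n. (R ^^ Suc j) (\<lambda>_. 1) x)"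
    by (subst sum.lessThan_Suc_shift) simp
  also have "(\<Sum>j<n. (R ^^ Suc j) (\<lambda>_. 1) x) = R (\<lambda>y. \<Sum>j<n. (R ^^ j) (\<lambda>_. 1) y) x"
    by (subst R_sum) simp
  also have "\<dots> \<le> R W x"
    by (rule R_mono_supp[OF Suc.prems]) (rule Suc.IH)
  also have "1 + R W x \<le> W x" by (rule W_drift[OF Suc.prems])
  finally show ?case by - (simp add: add_left_mono)
qed

lemma law1_eq: "law1 k0 \<mu> \<mu>'' z = Lx (fst z)"
  by (simp add: law1_def Lx_def)

lemma Pg_eq:
  "(\<integral>\<^sup>+z'. ennreal (trans_prob (law1 k0 \<mu> \<mu>'') z z') * g z' \<partial>count_space UNIV)
   = (\<integral>\<^sup>+d. g (fst z + fst d, snd z + snd d) \<partial>measure_pmf (Lx (fst z)))"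
proof -
  have bij: "bij_betw (\<lambda>z'::int\<times>int. (fst z' - fst z, snd z' - snd z)) UNIV UNIV"
    by (rule bij_betwI[where g = "\<lambda>d. (fst z + fst d, snd z + snd d)"]) auto
  have "(\<integral>\<^sup>+d. g (fst z + fst d, snd z + snd d) \<partial>measure_pmf (Lx (fst z)))
      = (\<integral>\<^sup>+d. ennreal (pmf (Lx (fst z)) d) * g (fst z + fst d, snd z + snd d) \<partial>count_space UNIV)"
    by (rule nn_integral_measure_pmf)
  also have "\<dots> = (\<integral>\<^sup>+z'. (\<lambda>d. ennreal (pmf (Lx (fst z)) d) * g (fst z + fst d, snd z + snd d)) (fst z' - fst z, snd z' - snd z) \<partial>count_space UNIV)"
    by (rule nn_integral_bij_count_space[OF bij, symmetric])
  also have "\<dots> = (\<integral>\<^sup>+z'. ennreal (trans_prob (law1 k0 \<mu> \<mu>'') z z') * g z' \<partial>count_space UNIV)"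
    by (simp add: trans_prob_def law1_eq)
  finally show ?thesis ..
qed

lemma SUP_if_ennreal:
  fixes f :: "nat \<Rightarrow> ennreal"
  shows "(\<Squnion>s\<in>{s. P s}. f s) = (\<Squnion>s. if P s then f s else 0)"
proof (rule antisym)
  show "(\<Squnion>s\<in>{s. P s}. f s) \<le> (\<Squnion>s. if P s then f s else 0)"
  proof (rule SUP_mono)
    fix n assume "n \<in> {s. P s}"
    then show "\<exists>m\<in>UNIV. f n \<le> (if P m then f m else 0)" by (intro bexI[of _ n]) auto
  qed
  show "(\<Squnion>s. if P s then f s else 0) \<le> (\<Squnion>s\<in>{s. P s}. f s)"
  proof (rule SUP_least)
    fix s
    show "(if P s then f s else 0) \<le> (\<Squnion>s\<in>{s. P s}. f s)"
    proof (cases "P s")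
      case True
      then show ?thesis by (simp add: SUP_upper)
    qed simp
  qed
qed

lemma telescope:
  fixes Y :: "nat \<Rightarrow> int"
  shows "\<bar>Y s - Y 0\<bar> \<le> (\<Sum>i<s. \<bar>Y (Suc i) - Y i\<bar>)"
proof (induction s)
  case 0 then show ?case by simp
next
  case (Suc s)
  have "\<bar>Y (Suc s) - Y 0\<bar> \<le> \<bar>Y (Suc s) - Y s\<bar> + \<bar>Y s - Y 0\<bar>" by simp
  then show ?case using Suc by simp
qed

lemma Rpow_cmult: "(R ^^ n) (\<lambda>y. c * f y) x = c * (R ^^ n) f x"
proof (induction n arbitrary: x)
  case (Suc n)
  have "(R ^^ n) (\<lambda>y. c * f y) = (\<lambda>y. c * (R ^^ n) f y)"
    by (rule ext) (rule Suc.IH)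
  then have "(R ^^ Suc n) (\<lambda>y. c * f y) x = R (\<lambda>y. c * (R ^^ n) f y) x"
    by simp
  also have "\<dots> = c * (R ^^ Suc n) f x" by (simp only: R_cmult funpow.simps comp_apply)
  finally show ?case .
qed simp

lemma main_bound:
  fixes M :: "'a measure" and Z :: "nat \<Rightarrow> 'a \<Rightarrow> int \<times> int"
  assumes chain: "markov_chain_from M Z (trans_prob (law1 k0 \<mu> \<mu>'')) (int k, 0)"
  defines "T \<equiv> \<lambda>\<omega>. (\<Sqinter>n\<in>{n. 0 < n \<and> fst (Z n \<omega>) = int k}. enat n)"
  shows "(\<lambda>\<omega>. \<Squnion>s\<in>{s. enat s \<le> T \<omega>}. ennreal (real_of_int \<bar>snd (Z s \<omega>)\<bar>)) \<in> borel_measurable M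
    \<and> (\<integral>\<^sup>+ \<omega>. (\<Squnion>s\<in>{s. enat s \<le> T \<omega>}. ennreal (real_of_int \<bar>snd (Z s \<omega>)\<bar>)) \<partial>M) < \<infinity>"
proof -
  let ?p = "trans_prob (law1 k0 \<mu> \<mu>'')"
  have pnn: "\<And>z z'. ?p z z' \<ge> 0" by (simp add: trans_prob_def)
  interpret prob_space M by (rule ps[OF chain])
  have histm[measurable]: "\<And>n. hist Z n \<in> measurable M (count_space UNIV)"
    by (rule hist_meas[OF chain])
  have Zm[measurable]: "\<And>n. Z n \<in> measurable M (count_space UNIV)"
    by (rule Z_meas[OF chain])
  define Fi where "Fi = (\<lambda>i (l :: (int \<times> int) list). (if \<forall>j. 1 \<le> j \<and> j \<le> i \<longrightarrow> fst (l ! j) \<noteq> int k then 1 else 0 :: ennreal))"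
  have Fi_hist: "Fi i (hist Z i \<omega>) = (if \<forall>j. 1 \<le> j \<and> j \<le> i \<longrightarrow> fst (Z j \<omega>) \<noteq> int k then 1 else 0)" for i \<omega>
    unfolding Fi_def by (auto simp: hist_nth[OF chain])
  have Fi_Suc: "Fi (Suc i) (hist Z (Suc i) \<omega>) = Fi i (hist Z i \<omega>) * (if fst (Z (Suc i) \<omega>) = int k then 0 else 1)" for i \<omega>
    unfolding Fi_hist by (auto simp: le_Suc_eq)
  have Q2: "(\<integral>\<^sup>+\<omega>. Fi i (hist Z i \<omega>) * f (fst (Z i \<omega>)) \<partial>M) = (R ^^ i) f (int k)" for i f
  proof (induction i arbitrary: f)
    case 0
    have "(\<integral>\<^sup>+\<omega>. Fi 0 (hist Z 0 \<omega>) * f (fst (Z 0 \<omega>)) \<partial>M) = (\<integral>\<^sup>+\<omega>. f (int k) \<partial>M)"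
      by (rule nn_integral_cong_AE) (use AE_start[OF chain] in \<open>auto simp: Fi_hist\<close>)
    then show ?case by (simp add: emeasure_space_1)
  next
    case (Suc i)
    have "(\<integral>\<^sup>+\<omega>. Fi (Suc i) (hist Z (Suc i) \<omega>) * f (fst (Z (Suc i) \<omega>)) \<partial>M)
       = (\<integral>\<^sup>+\<omega>. Fi i (hist Z i \<omega>) * (\<lambda>z z'. if fst z' = int k then 0 else f (fst z')) (Z i \<omega>) (Z (Suc i) \<omega>) \<partial>M)"
      by (rule nn_integral_cong) (simp add: Fi_Suc)
    also have "\<dots> = (\<integral>\<^sup>+\<omega>. Fi i (hist Z i \<omega>) * (\<integral>\<^sup>+z'. ennreal (?p (Z i \<omega>) z') * (\<lambda>z z'. if fst z' = int k then 0 else f (fst z')) (Z i \<omega>) z' \<partial>count_space UNIV) \<partial>M)"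
      by (rule markov_step[OF chain pnn])
    also have "\<dots> = (\<integral>\<^sup>+\<omega>. Fi i (hist Z i \<omega>) * R f (fst (Z i \<omega>)) \<partial>M)"
      by (rule nn_integral_cong) (simp only: Pg_eq R_def fst_conv)
    also have "\<dots> = (R ^^ i) (R f) (int k)" by (rule Suc.IH)
    also have "\<dots> = (R ^^ Suc i) f (int k)" by (simp only: funpow_Suc_right comp_apply)
    finally show ?case .
  qed
  have Q1: "(\<integral>\<^sup>+\<omega>. Fi i (hist Z i \<omega>) * ennreal (real_of_int \<bar>snd (Z (Suc i) \<omega>) - snd (Z i \<omega>)\<bar>) \<partial>M)
       \<le> ennreal cY * (R ^^ i) (\<lambda>_. 1) (int k)" for i
  proof -
    have e1: "(\<integral>\<^sup>+\<omega>. Fi i (hist Z i \<omega>) * ennreal (real_of_int \<bar>snd (Z (Suc i) \<omega>) - snd (Z i \<omega>)\<bar>) \<partial>M)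
      = (\<integral>\<^sup>+\<omega>. Fi i (hist Z i \<omega>) * (\<integral>\<^sup>+z'. ennreal (?p (Z i \<omega>) z') * ennreal (real_of_int \<bar>snd z' - snd (Z i \<omega>)\<bar>) \<partial>count_space UNIV) \<partial>M)"
      using markov_step[OF chain pnn, of "Fi i" i "\<lambda>z z'. ennreal (real_of_int \<bar>snd z' - snd z\<bar>)"] by simp
    have e2: "\<dots> = (\<integral>\<^sup>+\<omega>. Fi i (hist Z i \<omega>) * (\<integral>\<^sup>+d. ennreal (real_of_int \<bar>snd d\<bar>) \<partial>measure_pmf (Lx (fst (Z i \<omega>)))) \<partial>M)"
      by (rule nn_integral_cong) (simp add: Pg_eq)
    have e3: "\<dots> \<le> (\<integral>\<^sup>+\<omega>. Fi i (hist Z i \<omega>) * ennreal cY \<partial>M)"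
      by (intro nn_integral_mono mult_left_mono cY_bound) auto
    have e4: "(\<integral>\<^sup>+\<omega>. Fi i (hist Z i \<omega>) * ennreal cY \<partial>M) = (R ^^ i) (\<lambda>_. ennreal cY) (int k)"
      using Q2[of i "\<lambda>_. ennreal cY"] by simp
    have e5: "(R ^^ i) (\<lambda>_. ennreal cY) (int k) = ennreal cY * (R ^^ i) (\<lambda>_. 1) (int k)"
      using Rpow_cmult[of i "ennreal cY" "\<lambda>_. 1" "int k"] by simp
    show ?thesis using e1 e2 e3 e4 e5 by simp
  qed
  define costN where "costN = (\<lambda>n \<omega>. \<Sum>i<n. Fi i (hist Z i \<omega>) * ennreal (real_of_int \<bar>snd (Z (Suc i) \<omega>) - snd (Z i \<omega>)\<bar>))"
  have termm: "(\<lambda>\<omega>. Fi i (hist Z i \<omega>) * ennreal (real_of_int \<bar>snd (Z (Suc i) \<omega>) - snd (Z i \<omega>)\<bar>)) \<in> borel_measurable M" for i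
  proof -
    have a: "(\<lambda>\<omega>. Fi i (hist Z i \<omega>)) \<in> borel_measurable M"
      by (rule measurable_compose[OF histm]) (simp only: measurable_count_space_eq1 space_borel, blast)
    have b0: "(\<lambda>\<omega>. (Z (Suc i) \<omega>, Z i \<omega>)) \<in> measurable M (count_space UNIV \<Otimes>\<^sub>M count_space UNIV)"
      by (rule measurable_Pair) (rule Zm)+
    have b: "(\<lambda>\<omega>. (Z (Suc i) \<omega>, Z i \<omega>)) \<in> measurable M (count_space UNIV)"
      using b0 by (simp add: pair_measure_countable)
    have c: "(\<lambda>\<omega>. (\<lambda>(u :: int \<times> int, v :: int \<times> int). ennreal (real_of_int \<bar>snd u - snd v\<bar>)) (Z (Suc i) \<omega>, Z i \<omega>)) \<in> borel_measurable M"
      by (rule measurable_compose[OF b]) (simp only: measurable_count_space_eq1 space_borel, blast)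
    have c': "(\<lambda>\<omega>. ennreal (real_of_int \<bar>snd (Z (Suc i) \<omega>) - snd (Z i \<omega>)\<bar>)) \<in> borel_measurable M"
      using c by (simp only: case_prod_conv)
    show ?thesis by (rule borel_measurable_times_ennreal[OF a c'])
  qed
  have costm[measurable]: "costN n \<in> borel_measurable M" for n
    unfolding costN_def by (rule borel_measurable_sum) (rule termm)
  have cost_int: "(\<integral>\<^sup>+\<omega>. costN n \<omega> \<partial>M) \<le> ennreal cY * W (int k)" for n
  proof -
    have "(\<integral>\<^sup>+\<omega>. costN n \<omega> \<partial>M) = (\<Sum>i<n. \<integral>\<^sup>+\<omega>. Fi i (hist Z i \<omega>) * ennreal (real_of_int \<bar>snd (Z (Suc i) \<omega>) - snd (Z i \<omega>)\<bar>) \<partial>M)"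
      unfolding costN_def by (rule nn_integral_sum) (rule termm)
    also have "\<dots> \<le> (\<Sum>i<n. ennreal cY * (R ^^ i) (\<lambda>_. 1) (int k))"
      by (intro sum_mono Q1)
    also have "\<dots> = ennreal cY * (\<Sum>i<n. (R ^^ i) (\<lambda>_. 1) (int k))"
      by (simp add: sum_distrib_left)
    also have "\<dots> \<le> ennreal cY * W (int k)"
      by (intro mult_left_mono green_le_W) auto
    finally show ?thesis .
  qed
  have inc: "incseq costN"
    unfolding costN_def incseq_def le_fun_def
    by (auto intro!: sum_mono2)
  define S where "S = (\<lambda>\<omega>. \<Squnion>s\<in>{s. enat s \<le> T \<omega>}. ennreal (real_of_int \<bar>snd (Z s \<omega>)\<bar>))"
  have T_le: "enat s \<le> T \<omega> \<longleftrightarrow> (\<forall>j<s. 0 < j \<longrightarrow> fst (Z j \<omega>) \<noteq> int k)" for s \<omega>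
    unfolding T_def le_INF_iff by (auto simp: not_le) (meson not_le)
  have S_alt: "S \<omega> = (\<Squnion>s. if (\<forall>j<s. 0 < j \<longrightarrow> fst (Z j \<omega>) \<noteq> int k) then ennreal (real_of_int \<bar>snd (Z s \<omega>)\<bar>) else 0)" for \<omega>
    unfolding S_def T_le by (rule SUP_if_ennreal)
  have Sm: "S \<in> borel_measurable M"
  proof -
    have "(\<lambda>\<omega>. if (\<forall>j<s. 0 < j \<longrightarrow> fst (Z j \<omega>) \<noteq> int k) then ennreal (real_of_int \<bar>snd (Z s \<omega>)\<bar>) else 0) \<in> borel_measurable M" for s
    proof -
      have mm: "(\<lambda>\<omega>. (\<lambda>l. if (\<forall>j<s. 0 < j \<longrightarrow> fst (l ! j) \<noteq> int k) then ennreal (real_of_int \<bar>snd (l ! s)\<bar>) else 0) (hist Z s \<omega>)) \<in> borel_measurable M"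
        by (rule measurable_compose[OF histm]) (simp only: measurable_count_space_eq1 space_borel, blast)
      moreover have ee: "(\<lambda>l. if (\<forall>j<s. 0 < j \<longrightarrow> fst (l ! j) \<noteq> int k) then ennreal (real_of_int \<bar>snd (l ! s)\<bar>) else 0) (hist Z s \<omega>)
          = (if (\<forall>j<s. 0 < j \<longrightarrow> fst (Z j \<omega>) \<noteq> int k) then ennreal (real_of_int \<bar>snd (Z s \<omega>)\<bar>) else 0)" for \<omega>
      proof -
        have h1: "hist Z s \<omega> ! j = Z j \<omega>" if "j < s" for j using hist_nth[OF chain] that by simp
        have h2: "hist Z s \<omega> ! s = Z s \<omega>" using hist_nth[OF chain] by simp
        have eq: "(\<forall>j<s. 0 < j \<longrightarrow> fst (hist Z s \<omega> ! j) \<noteq> int k) = (\<forall>j<s. 0 < j \<longrightarrow> fst (Z j \<omega>) \<noteq> int k)"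
          by (simp add: h1 cong: all_cong)
        show ?thesis by (simp only: eq h2)
      qed
      show ?thesis using mm unfolding ee .
    qed
    note ms = this
    have "(\<lambda>\<omega>. \<Squnion>s. if (\<forall>j<s. 0 < j \<longrightarrow> fst (Z j \<omega>) \<noteq> int k) then ennreal (real_of_int \<bar>snd (Z s \<omega>)\<bar>) else 0) \<in> borel_measurable M"
      by (rule borel_measurable_SUP) (rule countableI_type, rule ms)
    moreover have "S = (\<lambda>\<omega>. \<Squnion>s. if (\<forall>j<s. 0 < j \<longrightarrow> fst (Z j \<omega>) \<noteq> int k) then ennreal (real_of_int \<bar>snd (Z s \<omega>)\<bar>) else 0)"
      by (rule ext) (rule S_alt)
    ultimately show ?thesis by (simp only:)
  qed
  have pw: "S \<omega> \<le> (\<Squnion>n. costN n \<omega>)" if z0: "Z 0 \<omega> = (int k, 0)" for \<omega>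
    unfolding S_def
  proof (rule SUP_least)
    fix s assume "s \<in> {s. enat s \<le> T \<omega>}"
    then have noh: "\<forall>j<s. 0 < j \<longrightarrow> fst (Z j \<omega>) \<noteq> int k" using T_le by auto
    have i1: "\<bar>snd (Z s \<omega>)\<bar> \<le> (\<Sum>i<s. \<bar>snd (Z (Suc i) \<omega>) - snd (Z i \<omega>)\<bar>)"
      using telescope[of "\<lambda>i. snd (Z i \<omega>)" s] z0 by simp
    have i2: "real_of_int \<bar>snd (Z s \<omega>)\<bar> \<le> (\<Sum>i<s. real_of_int \<bar>snd (Z (Suc i) \<omega>) - snd (Z i \<omega>)\<bar>)"
      using i1 unfolding of_int_sum[symmetric] by (simp only: of_int_le_iff)
    have i3: "ennreal (\<Sum>i<s. real_of_int \<bar>snd (Z (Suc i) \<omega>) - snd (Z i \<omega>)\<bar>) = (\<Sum>i<s. ennreal (real_of_int \<bar>snd (Z (Suc i) \<omega>) - snd (Z i \<omega>)\<bar>))"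
      by (rule sum_ennreal[symmetric]) simp
    have "ennreal (real_of_int \<bar>snd (Z s \<omega>)\<bar>) \<le> (\<Sum>i<s. ennreal (real_of_int \<bar>snd (Z (Suc i) \<omega>) - snd (Z i \<omega>)\<bar>))"
      using ennreal_leI[OF i2] i3 by simp
    also have "\<dots> = costN s \<omega>"
      unfolding costN_def
      by (rule sum.cong) (use noh in \<open>auto simp: Fi_hist\<close>)
    also have "\<dots> \<le> (\<Squnion>n. costN n \<omega>)" by (rule SUP_upper) simp
    finally show "ennreal (real_of_int \<bar>snd (Z s \<omega>)\<bar>) \<le> (\<Squnion>n. costN n \<omega>)" .
  qed
  have "(\<integral>\<^sup>+\<omega>. S \<omega> \<partial>M) \<le> (\<integral>\<^sup>+\<omega>. (\<Squnion>n. costN n \<omega>) \<partial>M)"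
  proof (rule nn_integral_mono_AE)
    show "AE \<omega> in M. S \<omega> \<le> (\<Squnion>n. costN n \<omega>)"
      using AE_start[OF chain] by eventually_elim (rule pw)
  qed
  also have "\<dots> = (\<Squnion>n. \<integral>\<^sup>+\<omega>. costN n \<omega> \<partial>M)"
    by (rule nn_integral_monotone_convergence_SUP[OF inc costm])
  also have "\<dots> \<le> ennreal cY * W (int k)"
    by (rule SUP_least) (rule cost_int)
  also have "\<dots> < \<infinity>"
    using W_fin[of "int k"] by (simp add: ennreal_mult_less_top)
  finally show ?thesis using Sm unfolding S_def by simp
qed
end
end



theorem lemmaA2:
  fixes k0 :: nat
    and \<mu> :: "(int \<times> int) pmf"
    and \<mu>' \<mu>'' :: "nat \<Rightarrow> (int \<times> int) pmf"
    and \<mu>2 :: "nat \<Rightarrow> nat \<Rightarrow> (int \<times> int) pmf"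
    and \<delta> \<gamma> C :: real
    and k :: nat
    and M :: "'a measure"
    and Z :: "nat \<Rightarrow> 'a \<Rightarrow> int \<times> int"
  assumes k0: "k0 \<ge> 1"
    \<comment> \<open>(A1)\<close>
    and A1_mu: "\<And>a b. a < - int k0 \<or> b < - int k0 \<Longrightarrow> pmf \<mu> (a, b) = 0"
    and A1_mu': "\<And>j a b. j < k0 \<Longrightarrow> a < - int k0 \<or> b < - int j \<Longrightarrow> pmf (\<mu>' j) (a, b) = 0"
    and A1_mu'': "\<And>i a b. i < k0 \<Longrightarrow> b < - int k0 \<or> a < - int i \<Longrightarrow> pmf (\<mu>'' i) (a, b) = 0"
    and A1_mu2: "\<And>i j a b. i < k0 \<Longrightarrow> j < k0 \<Longrightarrow> a < - int i \<or> b < - int j \<Longrightarrow> pmf (\<mu>2 i j) (a, b) = 0"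
    \<comment> \<open>(A2)\<close>
    and A2_pos: "\<delta> > 0" "\<gamma> > 0" "C > 0"
    and A2: "\<And>z. z \<in> natsq \<Longrightarrow>
       (\<integral>\<^sup>+ d. ennreal (exp (\<delta> * real_of_int (fst d) + \<gamma> * real_of_int (snd d)))
          \<partial>measure_pmf (lawZ k0 \<mu> \<mu>' \<mu>'' \<mu>2 z)) \<le> ennreal C"
    \<comment> \<open>(A3)\<close>
    and A3_Z0: "irreducible_on UNIV (trans_prob (\<lambda>_. \<mu>))"
    and A3_Z1: "irreducible_on nat_int (trans_prob (law1 k0 \<mu> \<mu>''))"
    and A3_Z2: "irreducible_on int_nat (trans_prob (law2 k0 \<mu> \<mu>'))"
    and A3_Z: "irreducible_on natsq (trans_prob (lawZ k0 \<mu> \<mu>' \<mu>'' \<mu>2))"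
    \<comment> \<open>negative horizontal drift\<close>
    and m1: "measure_pmf.expectation \<mu> (\<lambda>d. real_of_int (fst d)) < 0"
    \<comment> \<open>Z = (X_1, Y_1) is the chain Z_1 started at (k,0), i.e. has law P_(k,0)\<close>
    and chain: "markov_chain_from M Z (trans_prob (law1 k0 \<mu> \<mu>'')) (int k, 0)"
  defines "T \<equiv> \<lambda>\<omega>. (\<Sqinter>n\<in>{n. 0 < n \<and> fst (Z n \<omega>) = int k}. enat n)"
  shows "(\<lambda>\<omega>. \<Squnion>s\<in>{s. enat s \<le> T \<omega>}. ennreal (real_of_int \<bar>snd (Z s \<omega>)\<bar>)) \<in> borel_measurable M
    \<and> (\<integral>\<^sup>+ \<omega>. (\<Squnion>s\<in>{s. enat s \<le> T \<omega>}. ennreal (real_of_int \<bar>snd (Z s \<omega>)\<bar>)) \<partial>M) < \<infinity>"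
proof -
  note Lxd = Lx_def[OF k0 A1_mu A1_mu'' A2_pos]
  note rXd = rX_def[OF k0 A1_mu A1_mu'' A2_pos]
  have expb: "(\<integral>\<^sup>+ d. ennreal (exp (\<delta> * real_of_int (fst d) + \<gamma> * real_of_int (snd d)))
          \<partial>measure_pmf (Lx k0 \<mu> \<mu>'' x)) \<le> ennreal C" for x
  proof (cases "int k0 \<le> x")
    case True
    have "lawZ k0 \<mu> \<mu>' \<mu>'' \<mu>2 (int k0, int k0) = Lx k0 \<mu> \<mu>'' x"
      using True by (simp add: lawZ_def Lxd)
    moreover have "(int k0, int k0) \<in> natsq" by (simp add: natsq_def)
    ultimately show ?thesis using A2 by metis
  next
    case False
    have "nat x < k0" using False k0 by linarith
    then have "lawZ k0 \<mu> \<mu>' \<mu>'' \<mu>2 (int (nat x), int k0) = Lx k0 \<mu> \<mu>'' x"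
      using False by (simp add: lawZ_def Lxd)
    moreover have "(int (nat x), int k0) \<in> natsq" by (simp add: natsq_def)
    ultimately show ?thesis using A2 by metis
  qed
  let ?rZ = "{(u, v). u \<in> nat_int \<and> v \<in> nat_int \<and> trans_prob (law1 k0 \<mu> \<mu>'') u v > 0}"
  let ?rX = "rX k0 \<mu> \<mu>''"
  have proj: "(fst u, fst v) \<in> ?rX\<^sup>*" if "(u, v) \<in> ?rZ\<^sup>*" for u v
    using that
  proof (induction rule: rtrancl_induct)
    case base
    then show ?case by simp
  next
    case (step v w)
    then have "v \<in> nat_int" "trans_prob (law1 k0 \<mu> \<mu>'') v w > 0" by auto
    then have "(fst v, fst w) \<in> ?rX"
      by (subst rXd) (auto simp: nat_int_def trans_prob_def law1_def Lxd intro!: exI[of _ "snd w - snd v"])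
    then show ?case using step.IH by (rule rtrancl_into_rtrancl[rotated])
  qed
  have star: "(x, y) \<in> ?rX\<^sup>*" if "0 \<le> x" "0 \<le> y" for x y
  proof -
    have "((x, 0), (y, 0)) \<in> ?rZ\<^sup>*"
      using A3_Z1 that unfolding irreducible_on_def by (auto simp: nat_int_def)
    from proj[OF this] show ?thesis by simp
  qed
  have plus: "(x, y) \<in> ?rX\<^sup>+" if "0 \<le> x" "0 \<le> y" "x \<noteq> y" for x y
    using star[OF that(1,2)] that(3) by (auto dest: rtranclD)
  have reachA: "(x, int k) \<in> ?rX\<^sup>+" if "0 \<le> x" for x
  proof (cases "x = int k")
    case False
    then show ?thesis using plus[OF that] by simp
  next
    case True
    have "(int k, int k + 1) \<in> ?rX\<^sup>+" by (rule plus) auto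
    moreover have "(int k + 1, int k) \<in> ?rX\<^sup>+" by (rule plus) auto
    ultimately show ?thesis using True by (meson trancl_trans)
  qed
  show ?thesis
    unfolding T_def
    by (rule main_bound[OF k0 A1_mu A1_mu'' A2_pos expb m1 reachA chain])
qed


end
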